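(* Let $\alpha\in\mathbb{N}_0$. For $k\in\mathbb{N}$ let $\Gamma_k^{(\alpha)}$ have density $L_\alpha^{(k-\alpha-1)}(x)^2x^{k-\alpha-1}e^{-x}\mathbf{1}_{x\ge0}$ and let $\Gamma_k$ be gamma-distributed with shape $k$ and rate $1$. Then for all $k\in\mathbb{N}$ and $R>0$ with $k\ge R>2\alpha+2$, \[ \mathbb{P}\bigl[\Gamma_k^{(\alpha)}\le R\bigr]\le3^{2\alpha+1}R^{\alpha+1}\,\mathbb{P}\bigl[\Gamma_{k-2\alpha-2}\le R\bigr], \] and for all $k\in\mathbb{N}$ and $R$ with $1\le k\le R$, \[ \mathbb{P}\bigl[\Gamma_k^{(\alpha)}\ge R\bigr]\le4^\alpha k^\alpha\,\mathbb{P}\bigl[\Gamma_{k+\alpha}\ge R\bigr]. \]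
   Context: For $\beta\ge-\alpha$, $L_\alpha^{(\beta)}$ is the generalized Laguerre polynomial of degree $\alpha$ normalized so that $\int_0^\infty L_\alpha^{(\beta)}(x)^2x^\beta e^{-x}\mathrm{d}x=1$; explicitly $L_\alpha^{(\beta)}(x)=\sqrt{\frac{\alpha!}{\Gamma(\beta+\alpha+1)}}\sum_{\ell=0}^\alpha\binom{\alpha+\beta}{\alpha-\ell}\frac{(-x)^\ell}{\ell!}$ (up to sign). *)

theory Defs
  imports "HOL-Probability.Probability"
begin

definition laguerre :: "nat \<Rightarrow> real \<Rightarrow> real \<Rightarrow> real" where
  "laguerre \<alpha> \<beta> x =
     sqrt (fact \<alpha> / Gamma (\<beta> + real \<alpha> + 1)) *
     (\<Sum>l=0..\<alpha>. ((real \<alpha> + \<beta>) gchoose (\<alpha> - l)) * (- x) ^ l / fact l)"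

definition laguerre_gamma_density :: "nat \<Rightarrow> nat \<Rightarrow> real \<Rightarrow> real" where
  "laguerre_gamma_density \<alpha> k x =
     (if x \<ge> 0 then (laguerre \<alpha> (real k - real \<alpha> - 1) x)\<^sup>2
        * x powi (int k - int \<alpha> - 1) * exp (- x) else 0)"

(* Gamma distribution with shape k (k >= 1) and rate 1 = Erlang(k-1, 1) in the library *)
definition gamma_density :: "nat \<Rightarrow> real \<Rightarrow> real" where
  "gamma_density k x = erlang_density (k - 1) 1 x"

definition laguerre_gamma_distr :: "nat \<Rightarrow> nat \<Rightarrow> real measure" where
  "laguerre_gamma_distr \<alpha> k = density lborel (\<lambda>x. ennreal (laguerre_gamma_density \<alpha> k x))"

definition gamma_distr :: "nat \<Rightarrow> real measure" where
  "gamma_distr k = density lborel (\<lambda>x. ennreal (gamma_density k x))"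

end

theory Submission
  imports Defs
begin

lemma lemB:
  fixes K m :: nat
  assumes "m < K"
  shows "(real K + 1)^m * (real K - real m) \<le> real K^(m+1)"
  using assms
proof (induction m)
  case 0 then show ?case by simp
next
  case (Suc m)
  then have IH: "(real K + 1)^m * (real K - real m) \<le> real K^(m+1)" by simp
  have "(real K + 1)^(Suc m) * (real K - real (Suc m)) = (real K + 1)^m * ((real K + 1) * (real K - real m - 1))"
    by (simp add: algebra_simps)
  also have "\<dots> \<le> (real K + 1)^m * (real K * (real K - real m))"
    by (intro mult_left_mono) (auto simp: algebra_simps)
  also have "\<dots> = real K * ((real K + 1)^m * (real K - real m))" by simp
  also have "\<dots> \<le> real K * real K^(m+1)"
    by (intro mult_left_mono IH) auto
  finally show ?case by simp
qed

lemma exp2_bound: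
  fixes K :: nat assumes "K > 0"
  shows "(real K + 2)^K \<le> 9 * real K^K"
proof -
  have "1 + 2 / real K \<le> exp (2 / real K)" by (rule exp_ge_add_one_self)
  hence "(1 + 2 / real K)^K \<le> exp (2 / real K)^K"
    by (intro power_mono) (auto simp: assms)
  also have "\<dots> = exp 2" using assms by (simp add: exp_of_nat_mult[symmetric])
  also have "\<dots> = exp 1 * exp 1" by (simp add: exp_add[symmetric])
  also have "\<dots> \<le> 3 * 3" using exp_le by (intro mult_mono) auto
  finally have "(1 + 2 / real K)^K \<le> 9" by simp
  moreover have "(real K + 2)^K = real K^K * (1 + 2 / real K)^K"
    using assms by (simp add: power_mult_distrib[symmetric] field_simps)
  ultimately show ?thesis
    by (metis mult.commute mult_left_mono zero_le_power of_nat_0_le_iff)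
qed

lemma lemT:
  fixes a :: nat
  shows "4^a * real (2*a+3)^(2*a+1) \<le> 3^(2*a+1) * fact a * fact (2*a+2)"
proof (induction a rule: nat_less_induct)
  case (1 a)
  show ?case
  proof (cases "a \<le> 3")
    case True
    then have "a = 0 \<or> a = 1 \<or> a = 2 \<or> a = 3" by auto
    then show ?thesis by (auto simp: fact_numeral)
  next
    case False
    then obtain b where ab: "a = Suc b" and b3: "b \<ge> 3" by (cases a) auto
    have IH: "4^b * real (2*b+3)^(2*b+1) \<le> 3^(2*b+1) * fact b * fact (2*b+2)"
      using 1 ab by auto
    define K where "K = 2*b+3"
    have K0: "K > 0" by (simp add: K_def)
    have e1: "real (2*a+3) = real K + 2" by (simp add: K_def ab)
    have e2: "2*a+1 = K" by (simp add: K_def ab)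
    have "4^a * real (2*a+3)^(2*a+1) = 4^a * (real K + 2)^K"
      by (simp only: e1 e2)
    also have "\<dots> = 4 * 4^b * (real K + 2)^K" by (simp add: ab)
    also have "\<dots> \<le> 4 * 4^b * (9 * real K^K)"
      using exp2_bound[OF K0] by (intro mult_left_mono) auto
    also have "\<dots> = 36 * real K^2 * (4^b * real (2*b+3)^(2*b+1))"
    proof -
      have eK: "K = 2 + (2*b+1)" by (simp add: K_def)
      have "real K^K = real K^2 * real K^(2*b+1)" by (metis eK power_add)
      then have "real K^K = real K^2 * real (2*b+3)^(2*b+1)" by (simp only: K_def)
      then show ?thesis by simp
    qed
    also have "\<dots> \<le> 36 * real K^2 * (3^(2*b+1) * fact b * fact (2*b+2))"
      by (intro mult_left_mono IH) auto
    also have "\<dots> \<le> 9 * (real b+1) * (2*real b+4) * real K * (3^(2*b+1) * fact b * fact (2*b+2))"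
    proof (intro mult_right_mono)
      have "real K * 4 \<le> (real b+1) * (2*real b+4)"
      proof -
        have b3': "real b \<ge> 3" using b3 by simp
        have h: "real b * (real b * 2) \<ge> 3 * (real b * 2)" using b3' by (intro mult_right_mono) auto
        have "8 + real b * 2 \<le> real b * (real b * 2)" using h b3' by linarith
        then show ?thesis by (simp add: K_def algebra_simps)
      qed
      show "36 * real K^2 \<le> 9 * (real b+1) * (2*real b+4) * real K"
      proof -
        have "36 * real K^2 = (9 * real K) * (real K * 4)" by (simp add: power2_eq_square)
        also have "\<dots> \<le> (9 * real K) * ((real b+1) * (2*real b+4))"
          using \<open>real K * 4 \<le> (real b+1) * (2*real b+4)\<close> by (intro mult_left_mono) auto
        finally show ?thesis by (simp add: algebra_simps)
      qed
    qed auto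
    also have "\<dots> = 3^(2*a+1) * fact a * fact (2*a+2)"
      by (simp add: ab K_def fact_Suc algebra_simps power_add)
    finally show ?thesis .
  qed
qed


lemma lemA:
  fixes a d :: nat
  shows "4^a * real (2*a+3+d)^(2*a+1) * fact d \<le> 3^(2*a+1) * fact a * fact (2*a+2+d)"
proof (induction d)
  case 0 then show ?case using lemT[of a] by simp
next
  case (Suc d)
  define K where "K = 2*a+3+d"
  have hb: "(real K + 1)^(2*a+1) * (real K - real (2*a+1)) \<le> real K^(2*a+1+1)"
    by (rule lemB) (simp add: K_def)
  have e: "real K - real (2*a+1) = real d + 2" by (simp add: K_def)
  have h: "(real K + 1)^(2*a+1) * (real d + 2) \<le> real K^(2*a+1) * real K"
    using hb[unfolded e] by (simp only: power_add power_one_right)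
  have h2: "(real K + 1)^(2*a+1) * (real d + 1) \<le> real K^(2*a+1) * real K"
    by (rule order_trans[OF _ h]) (intro mult_left_mono, auto)
  have "4^a * real (2*a+3+Suc d)^(2*a+1) * fact (Suc d) = 4^a * fact d * ((real K + 1)^(2*a+1) * (real d + 1))"
    by (simp add: K_def fact_Suc algebra_simps)
  also have "\<dots> \<le> 4^a * fact d * (real K^(2*a+1) * real K)"
    using h2 by (intro mult_left_mono) auto
  also have "\<dots> = (4^a * real (2*a+3+d)^(2*a+1) * fact d) * real K" by (simp add: K_def algebra_simps)
  also have "\<dots> \<le> (3^(2*a+1) * fact a * fact (2*a+2+d)) * real K"
    using Suc.IH by (intro mult_right_mono) auto
  also have "\<dots> = 3^(2*a+1) * fact a * fact (2*a+2+Suc d)"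
    by (simp add: K_def fact_Suc algebra_simps)
  finally show ?case .
qed

lemma lemA':
  fixes a k :: nat
  assumes "k \<ge> 2*a+3"
  shows "4^a * real k^(2*a+1) * fact (k - 2*a - 3) \<le> 3^(2*a+1) * fact a * fact (k - 1)"
proof -
  obtain d where d: "k = 2*a+3+d" using assms le_Suc_ex by blast
  show ?thesis using lemA[of a d] by (simp add: d)
qed

lemma lemF:
  fixes a k :: nat
  assumes "k \<ge> 1"
  shows "fact (k + a - 1) \<le> fact a * real k^a * fact (k - 1)"
proof (induction a)
  case 0 then show ?case by simp
next
  case (Suc a)
  have e: "k + Suc a - 1 = Suc (k + a - 1)" using assms by simp
  have "fact (k + Suc a - 1) = real (k + a) * fact (k + a - 1)"
    unfolding e fact_Suc using assms by simp
  also have "\<dots> \<le> real (k + a) * (fact a * real k^a * fact (k - 1))"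
    using Suc.IH by (intro mult_left_mono) auto
  also have "\<dots> \<le> (real k * (real a + 1)) * (fact a * real k^a * fact (k - 1))"
  proof (intro mult_right_mono)
    have "real k * (real a + 1) = real k * real a + real k" by (simp add: algebra_simps)
    moreover have "real a * 1 \<le> real a * real k" using assms by (intro mult_left_mono) auto
    ultimately show "real (k + a) \<le> real k * (real a + 1)" by (simp add: algebra_simps)
  qed auto
  also have "\<dots> = fact (Suc a) * real k^(Suc a) * fact (k - 1)"
    by (simp add: fact_Suc algebra_simps)
  finally show ?case .
qed

lemma choose_le: "real (n choose j) \<le> real n^j / fact j"
proof -
  have "real ((n choose j) * fact j) \<le> real (n^j)" by (simp only: of_nat_le_iff binomial_fact_pow)
  then show ?thesis by (simp add: field_simps)
qed

lemma sum_inv_fact: "(\<Sum>l=0..a. 1 / (fact (a-l) * fact l) :: real) = 2^a / fact a"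
proof -
  have "(\<Sum>l=0..a. 1 / (fact (a-l) * fact l) :: real) = (\<Sum>l=0..a. real (a choose l) / fact a)"
    by (intro sum.cong) (auto simp: binomial_fact)
  also have "\<dots> = real (\<Sum>l\<le>a. a choose l) / fact a"
    by (simp add: sum_divide_distrib atLeast0AtMost)
  also have "\<dots> = 2^a / fact a" by (simp add: choose_row_sum)
  finally show ?thesis .
qed

lemma S_bound:
  fixes k a :: nat and x B :: real
  assumes "0 \<le> x" "x \<le> B" "real (k-1) \<le> B"
  shows "\<bar>\<Sum>l=0..a. real ((k-1) choose (a-l)) * (-x)^l / fact l\<bar> \<le> B^a * 2^a / fact a"
proof -
  have "\<bar>\<Sum>l=0..a. real ((k-1) choose (a-l)) * (-x)^l / fact l\<bar>
        \<le> (\<Sum>l=0..a. \<bar>real ((k-1) choose (a-l)) * (-x)^l / fact l\<bar>)" by (rule sum_abs)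
  also have "\<dots> \<le> (\<Sum>l=0..a. B^a * (1 / (fact (a-l) * fact l)))"
  proof (intro sum_mono)
    fix l assume l: "l \<in> {0..a}"
    have "\<bar>real ((k-1) choose (a-l)) * (-x)^l / fact l\<bar> = real ((k-1) choose (a-l)) * x^l / fact l"
      using assms by (simp add: abs_mult power_abs)
    also have "\<dots> \<le> (real (k-1)^(a-l) / fact (a-l)) * x^l / fact l"
      using assms choose_le by (intro divide_right_mono mult_right_mono) auto
    also have "\<dots> \<le> (B^(a-l) / fact (a-l)) * B^l / fact l"
      using assms by (intro divide_right_mono mult_mono power_mono) auto
    also have "\<dots> = B^a * (1 / (fact (a-l) * fact l))"
      using l by (simp add: power_add[symmetric])
    finally show "\<bar>real ((k-1) choose (a-l)) * (-x)^l / fact l\<bar> \<le> B^a * (1 / (fact (a-l) * fact l))" .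
  qed
  also have "\<dots> = B^a * (\<Sum>l=0..a. 1 / (fact (a-l) * fact l))" by (rule sum_distrib_left[symmetric])
  also have "\<dots> = B^a * 2^a / fact a" by (simp add: sum_inv_fact)
  finally show ?thesis .
qed


definition SS :: "nat \<Rightarrow> nat \<Rightarrow> real \<Rightarrow> real" where
  "SS a k x = (\<Sum>l=0..a. real ((k-1) choose (a-l)) * (-x)^l / fact l)"

lemma lag_sq:
  assumes k: "k \<ge> 1"
  shows "(laguerre a (real k - real a - 1) x)^2 = fact a / fact (k-1) * (SS a k x)^2"
proof -
  have e1: "real k - real a - 1 + real a + 1 = 1 + real (k-1)" using k by simp
  have e2: "real a + (real k - real a - 1) = real (k-1)" using k by simp
  have g: "Gamma (real k - real a - 1 + real a + 1) = fact (k-1)"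
    unfolding e1 by (rule Gamma_fact)
  have s: "(\<Sum>l=0..a. ((real a + (real k - real a - 1)) gchoose (a - l)) * (- x) ^ l / fact l) = SS a k x"
    unfolding e2 SS_def by (simp add: binomial_gbinomial)
  show ?thesis
    unfolding laguerre_def g s by (simp add: power_mult_distrib)
qed

lemma dens_eq:
  assumes k: "k \<ge> 1" and x: "x \<ge> 0"
  shows "laguerre_gamma_density a k x = fact a / fact (k-1) * (SS a k x)^2 * x powi (int k - int a - 1) * exp (-x)"
  using assms by (simp add: laguerre_gamma_density_def lag_sq)

lemma P2:
  fixes a k :: nat and x :: real
  assumes k: "k \<ge> 1" and x: "real k \<le> x"
  shows "laguerre_gamma_density a k x \<le> 4^a * real k^a * gamma_density (k+a) x"
proof -
  have x0: "x > 0" using k x by linarith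
  have Sb: "\<bar>SS a k x\<bar> \<le> x^a * 2^a / fact a"
    unfolding SS_def using x x0 by (intro S_bound) auto
  have S2: "(SS a k x)^2 \<le> (x^a * 2^a / fact a)^2"
    using Sb by (metis abs_le_square_iff abs_of_nonneg divide_nonneg_nonneg x0 less_imp_le mult_nonneg_nonneg zero_le_power zero_le_numeral fact_ge_zero)
  define Q where "Q = x^(k+a-1) * exp (-x)"
  have Q0: "Q \<ge> 0" using x0 by (simp add: Q_def)
  have pw: "x^(2*a) * x powi (int k - int a - 1) = x^(k+a-1)"
  proof -
    have "x^(2*a) * x powi (int k - int a - 1) = x powi (int (2*a)) * x powi (int k - int a - 1)"
      by (simp only: power_int_of_nat)
    also have "\<dots> = x powi (int (2*a) + (int k - int a - 1))"
      by (rule power_int_add[symmetric]) (use x0 in simp)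
    also have "int (2*a) + (int k - int a - 1) = int (k+a-1)" using k by simp
    finally show ?thesis by (simp add: power_int_of_nat)
  qed
  have "laguerre_gamma_density a k x = fact a / fact (k-1) * (SS a k x)^2 * x powi (int k - int a - 1) * exp (-x)"
    using dens_eq[OF k] x0 by simp
  also have "\<dots> \<le> fact a / fact (k-1) * (x^a * 2^a / fact a)^2 * x powi (int k - int a - 1) * exp (-x)"
    using S2 x0 by (intro mult_right_mono mult_left_mono) auto
  also have "\<dots> = 4^a / (fact a * fact (k-1)) * ((x^(2*a) * x powi (int k - int a - 1)) * exp (-x))"
  proof -
    have t: "((2::real)^a)^2 = 4^a" by (simp add: power2_eq_square power_mult_distrib[symmetric])
    have u: "(x^a)^2 = x^(2*a)" by (simp add: power_mult[symmetric] mult.commute)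
    have f1: "(x^a * 2^a / fact a)^2 = 4^a * x^(2*a) / (fact a * fact a)"
      by (simp add: power_divide power_mult_distrib t u power2_eq_square[of "fact a"])
    show ?thesis unfolding f1 by (simp add: field_simps)
  qed
  also have "\<dots> = 4^a / (fact a * fact (k-1)) * Q" unfolding pw Q_def by simp
  also have "\<dots> \<le> 4^a * real k^a / fact (k+a-1) * Q"
  proof (intro mult_right_mono Q0)
    have "fact (k + a - 1) \<le> fact a * real k^a * fact (k - 1)" by (rule lemF[OF k])
    then show "4^a / (fact a * fact (k-1)) \<le> 4^a * real k^a / fact (k+a-1)"
      by (simp add: divide_simps mult.assoc) (simp add: mult_left_mono mult.commute mult.left_commute)
  qed
  also have "\<dots> = 4^a * real k^a * gamma_density (k+a) x"
    using x0 k by (simp add: gamma_density_def erlang_density_def Q_def)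
  finally show ?thesis .
qed


lemma P1:
  fixes a k :: nat and x R :: real
  assumes k: "k \<ge> 2*a+3" and x0: "0 \<le> x" and xR: "x \<le> R" and Rk: "R \<le> real k"
  shows "laguerre_gamma_density a k x \<le> 3^(2*a+1) * R^(a+1) * gamma_density (k-2*a-2) x"
proof -
  have k1: "k \<ge> 1" using k by simp
  have Sb: "\<bar>SS a k x\<bar> \<le> real k^a * 2^a / fact a"
    unfolding SS_def using x0 xR Rk by (intro S_bound) auto
  have S2: "(SS a k x)^2 \<le> (real k^a * 2^a / fact a)^2"
    using Sb by (metis abs_le_square_iff abs_of_nonneg divide_nonneg_nonneg of_nat_0_le_iff mult_nonneg_nonneg zero_le_power zero_le_numeral fact_ge_zero)
  define Q where "Q = x^(k-2*a-3) * exp (-x)"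
  have Q0: "Q \<ge> 0" using x0 by (simp add: Q_def)
  have pe: "int k - int a - 1 = int (k-a-1)" using k by simp
  have px: "x^(k-a-1) = x^(a+2) * x^(k-2*a-3)"
  proof -
    have "k-a-1 = (a+2) + (k-2*a-3)" using k by simp
    then show ?thesis by (metis power_add)
  qed
  have xa: "x^(a+2) \<le> R^(a+1) * real k"
  proof -
    have "x^(a+2) = x^(a+1) * x" by simp
    also have "\<dots> \<le> R^(a+1) * real k"
      using x0 xR Rk by (intro mult_mono power_mono) auto
    finally show ?thesis .
  qed
  have t: "((2::real)^a)^2 = 4^a" by (simp add: power2_eq_square power_mult_distrib[symmetric])
  have u: "(real k^a)^2 = real k^(2*a)" by (simp add: power_mult[symmetric] mult.commute)
  have f1: "(real k^a * 2^a / fact a)^2 = 4^a * real k^(2*a) / (fact a * fact a)"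
    by (simp add: power_divide power_mult_distrib t u power2_eq_square[of "fact a"])
  have "laguerre_gamma_density a k x = fact a / fact (k-1) * (SS a k x)^2 * x powi (int k - int a - 1) * exp (-x)"
    using dens_eq[OF k1 x0] by simp
  also have "\<dots> = fact a / fact (k-1) * (SS a k x)^2 * x^(k-a-1) * exp (-x)"
    unfolding pe by simp
  also have "\<dots> \<le> fact a / fact (k-1) * (real k^a * 2^a / fact a)^2 * x^(k-a-1) * exp (-x)"
    using S2 x0 by (intro mult_right_mono mult_left_mono) auto
  also have "\<dots> = 4^a * real k^(2*a) / (fact a * fact (k-1)) * x^(a+2) * Q"
    unfolding f1 px Q_def by (simp add: field_simps)
  also have "\<dots> \<le> 4^a * real k^(2*a) / (fact a * fact (k-1)) * (R^(a+1) * real k) * Q"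
    using xa Q0 by (intro mult_right_mono mult_left_mono) auto
  also have "\<dots> = (4^a * real k^(2*a+1) / (fact a * fact (k-1))) * (R^(a+1) * Q)"
    by (simp add: field_simps)
  also have "\<dots> \<le> (3^(2*a+1) / fact (k-2*a-3)) * (R^(a+1) * Q)"
  proof (intro mult_right_mono)
    have "4^a * real k^(2*a+1) * fact (k - 2*a - 3) \<le> 3^(2*a+1) * fact a * fact (k - 1)"
      by (rule lemA'[OF k])
    then show "4^a * real k^(2*a+1) / (fact a * fact (k-1)) \<le> 3^(2*a+1) / fact (k-2*a-3)"
      by (simp add: divide_simps mult.assoc)
    show "0 \<le> R^(a+1) * Q" using Q0 x0 xR by simp
  qed
  also have "\<dots> = 3^(2*a+1) * R^(a+1) * gamma_density (k-2*a-2) x"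
  proof -
    have "k-2*a-2-1 = k-2*a-3" by simp
    then show ?thesis using x0 by (simp add: gamma_density_def erlang_density_def Q_def field_simps)
  qed
  finally show ?thesis .
qed


lemma meas_lgd[measurable]: "laguerre_gamma_density a k \<in> borel_measurable borel"
  unfolding laguerre_gamma_density_def[abs_def] laguerre_def power_int_def by measurable

lemma meas_gd[measurable]: "gamma_density k \<in> borel_measurable borel"
  unfolding gamma_density_def[abs_def] by measurable

lemma gamma_fin: "emeasure (gamma_distr k) A \<noteq> \<top>"
proof -
  interpret prob_space "density lborel (erlang_density (k-1) 1)"
    by (rule prob_space_erlang_density) simp
  have "gamma_distr k = density lborel (erlang_density (k-1) 1)"
    unfolding gamma_distr_def gamma_density_def by simp
  moreover have "emeasure (density lborel (erlang_density (k-1) 1)) A \<noteq> \<top>"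
    by (rule emeasure_finite)
  ultimately show ?thesis by simp
qed

lemma cmp:
  fixes f g :: "real \<Rightarrow> real" and C :: real
  assumes [measurable]: "f \<in> borel_measurable borel" "g \<in> borel_measurable borel"
    and A[measurable]: "A \<in> sets borel" and C: "C \<ge> 0"
    and le: "\<And>x. x \<in> A \<Longrightarrow> f x \<le> C * g x"
    and fin: "emeasure (density lborel (\<lambda>x. ennreal (g x))) A \<noteq> \<top>"
  shows "measure (density lborel (\<lambda>x. ennreal (f x))) A \<le> C * measure (density lborel (\<lambda>x. ennreal (g x))) A"
proof -
  have "emeasure (density lborel (\<lambda>x. ennreal (f x))) A = (\<integral>\<^sup>+ x. ennreal (f x) * indicator A x \<partial>lborel)"
    by (rule emeasure_density) auto
  also have "\<dots> \<le> (\<integral>\<^sup>+ x. ennreal C * (ennreal (g x) * indicator A x) \<partial>lborel)"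
  proof (intro nn_integral_mono)
    fix x
    show "ennreal (f x) * indicator A x \<le> ennreal C * (ennreal (g x) * indicator A x)"
    proof (cases "x \<in> A")
      case True
      then have "ennreal (f x) \<le> ennreal (C * g x)" using le by (intro ennreal_leI) auto
      also have "\<dots> = ennreal C * ennreal (g x)"
      proof (cases "g x \<ge> 0")
        case True then show ?thesis using C by (simp add: ennreal_mult)
      next
        case False
        then have "C * g x \<le> 0" using C by (simp add: mult_nonneg_nonpos)
        then show ?thesis using False by (simp add: ennreal_eq_0_iff ennreal_neg)
      qed
      finally show ?thesis using True by simp
    qed simp
  qed
  also have "\<dots> = ennreal C * (\<integral>\<^sup>+ x. ennreal (g x) * indicator A x \<partial>lborel)"
    by (rule nn_integral_cmult) auto
  also have "(\<integral>\<^sup>+ x. ennreal (g x) * indicator A x \<partial>lborel) = emeasure (density lborel (\<lambda>x. ennreal (g x))) A"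
    by (rule emeasure_density[symmetric]) auto
  finally have E: "emeasure (density lborel (\<lambda>x. ennreal (f x))) A \<le> ennreal C * emeasure (density lborel (\<lambda>x. ennreal (g x))) A" .
  have "measure (density lborel (\<lambda>x. ennreal (f x))) A \<le> enn2real (ennreal C * emeasure (density lborel (\<lambda>x. ennreal (g x))) A)"
    unfolding measure_def using E fin by (intro enn2real_mono) (auto simp: ennreal_mult_less_top top.not_eq_extremum)
  also have "\<dots> = C * measure (density lborel (\<lambda>x. ennreal (g x))) A"
    using C by (simp add: enn2real_mult measure_def)
  finally show ?thesis .
qed

theorem lemma4p4:
  fixes \<alpha> :: nat
  shows "(\<forall>(k::nat) (R::real). 1 \<le> k \<longrightarrow> R \<le> real k \<longrightarrow> R > 2 * real \<alpha> + 2 \<longrightarrow>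
            measure (laguerre_gamma_distr \<alpha> k) {..R}
              \<le> 3 ^ (2 * \<alpha> + 1) * R ^ (\<alpha> + 1) * measure (gamma_distr (k - 2 * \<alpha> - 2)) {..R})
       \<and> (\<forall>(k::nat) (R::real). 1 \<le> k \<longrightarrow> real k \<le> R \<longrightarrow>
            measure (laguerre_gamma_distr \<alpha> k) {R..}
              \<le> 4 ^ \<alpha> * real k ^ \<alpha> * measure (gamma_distr (k + \<alpha>)) {R..})"
proof (intro conjI allI impI)
  fix k :: nat and R :: real
  assume k1: "1 \<le> k" and Rk: "R \<le> real k" and R2: "R > 2 * real \<alpha> + 2"
  have k: "k \<ge> 2*\<alpha>+3" using Rk R2 by linarith
  have R0: "R \<ge> 0" using R2 by simp
  show "measure (laguerre_gamma_distr \<alpha> k) {..R}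
              \<le> 3 ^ (2 * \<alpha> + 1) * R ^ (\<alpha> + 1) * measure (gamma_distr (k - 2 * \<alpha> - 2)) {..R}"
    unfolding laguerre_gamma_distr_def gamma_distr_def
  proof (rule cmp)
    fix x assume x: "x \<in> {..R}"
    show "laguerre_gamma_density \<alpha> k x \<le> 3 ^ (2 * \<alpha> + 1) * R ^ (\<alpha> + 1) * gamma_density (k - 2 * \<alpha> - 2) x"
    proof (cases "x \<ge> 0")
      case True then show ?thesis using P1[OF k True _ Rk] x by auto
    next
      case False then show ?thesis
        by (simp add: laguerre_gamma_density_def gamma_density_def erlang_density_def)
    qed
  next
    show "emeasure (density lborel (\<lambda>x. ennreal (gamma_density (k - 2 * \<alpha> - 2) x))) {..R} \<noteq> \<top>"
      using gamma_fin unfolding gamma_distr_def by blast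
  qed (use R0 in auto)
next
  fix k :: nat and R :: real
  assume k1: "1 \<le> k" and Rk: "real k \<le> R"
  show "measure (laguerre_gamma_distr \<alpha> k) {R..}
              \<le> 4 ^ \<alpha> * real k ^ \<alpha> * measure (gamma_distr (k + \<alpha>)) {R..}"
    unfolding laguerre_gamma_distr_def gamma_distr_def
  proof (rule cmp)
    fix x assume x: "x \<in> {R..}"
    show "laguerre_gamma_density \<alpha> k x \<le> 4 ^ \<alpha> * real k ^ \<alpha> * gamma_density (k + \<alpha>) x"
      using P2[OF k1] x Rk by auto
  next
    show "emeasure (density lborel (\<lambda>x. ennreal (gamma_density (k + \<alpha>) x))) {R..} \<noteq> \<top>"
      using gamma_fin unfolding gamma_distr_def by blast
  qed auto
qed

end
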